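(* The following three conjugacies hold. (1) Let $\varphi_1:\operatorname{span}_{\mathbb{R}}\{1,\mathbf{i_1},\mathbf{i_2},\mathbf{j_1}\}\to\operatorname{span}_{\mathbb{R}}\{\mathbf{i_1},\mathbf{i_2},\mathbf{j_2},\mathbf{j_3}\}$, $\varphi_1(x_1+x_2\mathbf{i_1}+x_3\mathbf{i_2}+x_4\mathbf{j_1})=x_2\mathbf{i_1}+x_3\mathbf{i_2}+x_1\mathbf{j_2}-x_4\mathbf{j_3}$. For all real $c_1,c_2,c_3$, with $c=c_1+c_2\mathbf{i_1}+c_3\mathbf{i_2}$ and $c'=\varphi_1(c)=c_2\mathbf{i_1}+c_3\mathbf{i_2}+c_1\mathbf{j_2}$, we have $\varphi_1\circ Q_{3,c}\circ\varphi_1^{-1}=Q_{3,c'}$ on the codomain of $\varphi_1$. (2) Let $\varphi_2:\operatorname{span}_{\mathbb{R}}\{1,\mathbf{i_1},\mathbf{i_2},\mathbf{j_1}\}\to\operatorname{span}_{\mathbb{R}}\{\mathbf{i_1},\mathbf{j_1},\mathbf{j_2},\mathbf{i_4}\}$, $\varphi_2(x_1+x_2\mathbf{i_1}-x_3\mathbf{i_2}+x_4\mathbf{j_1})=x_2\mathbf{i_1}+x_4\mathbf{j_1}+x_1\mathbf{j_2}-x_3\mathbf{i_4}$. For all real $c_1,c_2,c_3$, with $c=c_1+c_2\mathbf{i_1}+c_3\mathbf{j_1}$ and $c'=\varphi_2(c)=c_2\mathbf{i_1}+c_3\mathbf{j_1}+c_1\mathbf{j_2}$, we have $\varphi_2\circ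 Q_{3,c}\circ\varphi_2^{-1}=Q_{3,c'}$ on the codomain of $\varphi_2$. (3) Let $\varphi_3:\operatorname{span}_{\mathbb{R}}\{1,\mathbf{j_1},\mathbf{j_2},\mathbf{j_3}\}\to\operatorname{span}_{\mathbb{R}}\{1,\mathbf{j_1},\mathbf{j_2},\mathbf{j_3}\}$, $\varphi_3(x_1+x_2\mathbf{j_1}+x_3\mathbf{j_2}-x_4\mathbf{j_3})=-x_4+x_1\mathbf{j_1}+x_2\mathbf{j_2}+x_3\mathbf{j_3}$. For all real $c_1,c_2,c_3$, with $c=c_1+c_2\mathbf{j_1}+c_3\mathbf{j_2}$ and $c'=\varphi_3(c)=c_1\mathbf{j_1}+c_2\mathbf{j_2}+c_3\mathbf{j_3}$, we have $\varphi_3\circ Q_{3,c}\circ\varphi_3^{-1}=Q_{3,c'}$. Consequently $\mathcal{T}^3(\mathbf{i_1},\mathbf{i_2},\mathbf{j_2})=\varphi_1(\mathcal{T}^3(1,\mathbf{i_1},\mathbf{i_2}))$, $\mathcal{T}^3(\mathbf{i_1},\mathbf{j_1},\mathbf{j_2})=\varphi_2(\mathcal{T}^3(1,\mathbf{i_1},\mathbf{j_1}))$ and $\mathcal{T}^3(\mathbf{j_1},\mathbf{j_2},\mathbf{j_3})=\varphi_3(\mathcal{T}^3(1,\mathbf{j_1},\mathbf{j_2}))$; i.e. these pairs of slices have the same dynamics.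
   Context: The tricomplex numbers $\mathbb{M}(3)$ form the commutative real algebra generated by commuting units $\mathbf{i_1},\mathbf{i_2},\mathbf{i_3}$ with $\mathbf{i_k}^2=-1$; set $\mathbf{j_1}=\mathbf{i_1}\mathbf{i_2}$, $\mathbf{j_2}=\mathbf{i_1}\mathbf{i_3}$, $\mathbf{j_3}=\mathbf{i_2}\mathbf{i_3}$, $\mathbf{i_4}=\mathbf{i_1}\mathbf{i_2}\mathbf{i_3}$, with real basis $1,\mathbf{i_1},\mathbf{i_2},\mathbf{i_3},\mathbf{i_4},\mathbf{j_1},\mathbf{j_2},\mathbf{j_3}$ and Euclidean norm on coordinates. For $c\in\mathbb{M}(3)$, $Q_{3,c}(\eta)=\eta^3+c$ and $Q_{3,c}^m$ is its $m$-fold iterate. For three distinct units $u,v,w$ among $1,\mathbf{i_1},\dots,\mathbf{i_4},\mathbf{j_1},\mathbf{j_2},\mathbf{j_3}$, the 3D slice is $\mathcal{T}^3(u,v,w)=\{c\in\operatorname{span}_{\mathbb{R}}\{u,v,w\} : (Q_{3,c}^m(0))_{m\geq1}\text{ is bounded}\}$. *)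

theory Defs
  imports Complex_Main
begin

text \<open>Tricomplex numbers M(3): real coordinates indexed by the monomials
  i1^a i2^b i3^c with a,b,c in {0,1}, encoded as (a,b,c) :: bool*bool*bool.
  Since the units commute and square to -1, the product of monomials is
  i_S * i_T = (-1)^|S inter T| * i_(S xor T).\<close>

type_synonym tc = "bool \<times> bool \<times> bool \<Rightarrow> real"

definition tc_xor :: "bool \<times> bool \<times> bool \<Rightarrow> bool \<times> bool \<times> bool \<Rightarrow> bool \<times> bool \<times> bool" where
  "tc_xor s t = (case (s, t) of ((a1,a2,a3),(b1,b2,b3)) \<Rightarrow> (a1 \<noteq> b1, a2 \<noteq> b2, a3 \<noteq> b3))"

definition tc_sign :: "bool \<times> bool \<times> bool \<Rightarrow> bool \<times> bool \<times> bool \<Rightarrow> real" where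
  "tc_sign s t = (case (s, t) of ((a1,a2,a3),(b1,b2,b3)) \<Rightarrow>
     (-1) ^ ((if a1 \<and> b1 then 1 else 0) + (if a2 \<and> b2 then 1 else 0) + (if a3 \<and> b3 then (1::nat) else 0)))"

definition tc_mul :: "tc \<Rightarrow> tc \<Rightarrow> tc" where
  "tc_mul x y = (\<lambda>k. \<Sum>s\<in>UNIV. \<Sum>t\<in>UNIV. if tc_xor s t = k then tc_sign s t * x s * y t else 0)"

definition tc_add :: "tc \<Rightarrow> tc \<Rightarrow> tc" where
  "tc_add x y = (\<lambda>k. x k + y k)"

definition tc_scale :: "real \<Rightarrow> tc \<Rightarrow> tc" where
  "tc_scale r x = (\<lambda>k. r * x k)"

definition tc_zero :: tc where
  "tc_zero = (\<lambda>k. 0)"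

definition tc_norm :: "tc \<Rightarrow> real" where
  "tc_norm x = sqrt (\<Sum>k\<in>UNIV. (x k)^2)"

definition basis :: "bool \<times> bool \<times> bool \<Rightarrow> tc" where
  "basis k = (\<lambda>j. if j = k then 1 else 0)"

definition "ix_1  = (False, False, False)"
definition "ix_i1 = (True, False, False)"
definition "ix_i2 = (False, True, False)"
definition "ix_i3 = (False, False, True)"
definition "ix_j1 = (True, True, False)"   \<comment> \<open>j1 = i1 i2\<close>
definition "ix_j2 = (True, False, True)"   \<comment> \<open>j2 = i1 i3\<close>
definition "ix_j3 = (False, True, True)"   \<comment> \<open>j3 = i2 i3\<close>
definition "ix_i4 = (True, True, True)"    \<comment> \<open>i4 = i1 i2 i3\<close>

definition "e_1  = basis ix_1"
definition "e_i1 = basis ix_i1"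
definition "e_i2 = basis ix_i2"
definition "e_i3 = basis ix_i3"
definition "e_j1 = basis ix_j1"
definition "e_j2 = basis ix_j2"
definition "e_j3 = basis ix_j3"
definition "e_i4 = basis ix_i4"

definition Q3 :: "tc \<Rightarrow> tc \<Rightarrow> tc" where
  "Q3 c \<eta> = tc_add (tc_mul \<eta> (tc_mul \<eta> \<eta>)) c"

definition span3 :: "tc \<Rightarrow> tc \<Rightarrow> tc \<Rightarrow> tc set" where
  "span3 u v w = {tc_add (tc_scale a u) (tc_add (tc_scale b v) (tc_scale d w)) | a b d. True}"

definition span4 :: "tc \<Rightarrow> tc \<Rightarrow> tc \<Rightarrow> tc \<Rightarrow> tc set" where
  "span4 u v w z = {tc_add (tc_scale a u) (tc_add (tc_scale b v) (tc_add (tc_scale d w) (tc_scale f z))) | a b d f. True}"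

definition bounded_orbit :: "tc \<Rightarrow> bool" where
  "bounded_orbit c \<longleftrightarrow> (\<exists>M. \<forall>m\<ge>1. tc_norm ((Q3 c ^^ m) tc_zero) \<le> M)"

definition T3 :: "tc \<Rightarrow> tc \<Rightarrow> tc \<Rightarrow> tc set" where
  "T3 u v w = {c \<in> span3 u v w. bounded_orbit c}"

definition phi1 :: "tc \<Rightarrow> tc" where
  "phi1 x = tc_add (tc_scale (x ix_i1) e_i1) (tc_add (tc_scale (x ix_i2) e_i2)
     (tc_add (tc_scale (x ix_1) e_j2) (tc_scale (- x ix_j1) e_j3)))"

text \<open>phi2(x1 + x2 i1 - x3 i2 + x4 j1) = x2 i1 + x4 j1 + x1 j2 - x3 i4,
  i.e. the i2-coefficient becomes the i4-coefficient.\<close>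
definition phi2 :: "tc \<Rightarrow> tc" where
  "phi2 x = tc_add (tc_scale (x ix_i1) e_i1) (tc_add (tc_scale (x ix_j1) e_j1)
     (tc_add (tc_scale (x ix_1) e_j2) (tc_scale (x ix_i2) e_i4)))"

text \<open>phi3(x1 + x2 j1 + x3 j2 - x4 j3) = -x4 + x1 j1 + x2 j2 + x3 j3,
  i.e. the j3-coefficient becomes the real part.\<close>
definition phi3 :: "tc \<Rightarrow> tc" where
  "phi3 x = tc_add (tc_scale (x ix_j3) e_1) (tc_add (tc_scale (x ix_1) e_j1)
     (tc_add (tc_scale (x ix_j1) e_j2) (tc_scale (x ix_j2) e_j3)))"

end

theory Submission
  imports Defs
begin

lemma UNIV_tc: "(UNIV::(bool\<times>bool\<times>bool) set) = {(False,False,False),(True,False,False),(False,True,False),(False,False,True),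
  (True,True,False),(True,False,True),(False,True,True),(True,True,True)}"
  by auto

lemma sum_tc: "(\<Sum>s\<in>UNIV. f s) = f (False,False,False) + f (True,False,False) + f (False,True,False) + f (False,False,True)
  + f (True,True,False) + f (True,False,True) + f (False,True,True) + f (True,True,True)"
  for f :: "bool\<times>bool\<times>bool \<Rightarrow> real"
  unfolding UNIV_tc by (simp add: algebra_simps)

lemma all_tc: "(\<forall>k::bool\<times>bool\<times>bool. P k) \<longleftrightarrow> P (False,False,False) \<and> P (True,False,False) \<and> P (False,True,False) \<and> P (False,False,True)
  \<and> P (True,True,False) \<and> P (True,False,True) \<and> P (False,True,True) \<and> P (True,True,True)"
proof -
  have "(\<forall>k::bool\<times>bool\<times>bool. P k) \<longleftrightarrow> (\<forall>k\<in>UNIV. P k)" by simp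
  also have "\<dots> \<longleftrightarrow> P (False,False,False) \<and> P (True,False,False) \<and> P (False,True,False) \<and> P (False,False,True)
  \<and> P (True,True,False) \<and> P (True,False,True) \<and> P (False,True,True) \<and> P (True,True,True)"
    unfolding UNIV_tc by simp
  finally show ?thesis .
qed

lemma tc_eqI:
  assumes "f (False,False,False) = g (False,False,False)" "f (True,False,False) = g (True,False,False)"
   "f (False,True,False) = g (False,True,False)" "f (False,False,True) = g (False,False,True)"
  "f (True,True,False) = g (True,True,False)" "f (True,False,True) = g (True,False,True)"
  "f (False,True,True) = g (False,True,True)" "f (True,True,True) = g (True,True,True)"
  shows "f = g"
proof
  fix k :: "bool\<times>bool\<times>bool" have "k \<in> UNIV" by simp
  then show "f k = g k" unfolding UNIV_tc using assms by auto
qed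

lemmas mulsimps = tc_mul_def sum_tc tc_xor_def tc_sign_def

lemma mul_coords:
  "tc_mul x y (False,False,False) = x (False,False,False) * y (False,False,False) - x (True,False,False) * y (True,False,False) - x (False,True,False) * y (False,True,False) - x (False,False,True) * y (False,False,True) + x (True,True,False) * y (True,True,False) + x (True,False,True) * y (True,False,True) + x (False,True,True) * y (False,True,True) - x (True,True,True) * y (True,True,True)"
  "tc_mul x y (True,False,False) = x (False,False,False) * y (True,False,False) + x (True,False,False) * y (False,False,False) - x (False,True,False) * y (True,True,False) - x (False,False,True) * y (True,False,True) - x (True,True,False) * y (False,True,False) - x (True,False,True) * y (False,False,True) + x (False,True,True) * y (True,True,True) + x (True,True,True) * y (False,True,True)"
  "tc_mul x y (False,True,False) = x (False,False,False) * y (False,True,False) - x (True,False,False) * y (True,True,False) + x (False,True,False) * y (False,False,False) - x (False,False,True) * y (False,True,True) - x (True,True,False) * y (True,False,False) + x (True,False,True) * y (True,True,True) - x (False,True,True) * y (False,False,True) + x (True,True,True) * y (True,False,True)"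
  "tc_mul x y (False,False,True) = x (False,False,False) * y (False,False,True) - x (True,False,False) * y (True,False,True) - x (False,True,False) * y (False,True,True) + x (False,False,True) * y (False,False,False) + x (True,True,False) * y (True,True,True) - x (True,False,True) * y (True,False,False) - x (False,True,True) * y (False,True,False) + x (True,True,True) * y (True,True,False)"
  "tc_mul x y (True,True,False) = x (False,False,False) * y (True,True,False) + x (True,False,False) * y (False,True,False) + x (False,True,False) * y (True,False,False) - x (False,False,True) * y (True,True,True) + x (True,True,False) * y (False,False,False) - x (True,False,True) * y (False,True,True) - x (False,True,True) * y (True,False,True) - x (True,True,True) * y (False,False,True)"
  "tc_mul x y (True,False,True) = x (False,False,False) * y (True,False,True) + x (True,False,False) * y (False,False,True) - x (False,True,False) * y (True,True,True) + x (False,False,True) * y (True,False,False) - x (True,True,False) * y (False,True,True) + x (True,False,True) * y (False,False,False) - x (False,True,True) * y (True,True,False) - x (True,True,True) * y (False,True,False)"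
  "tc_mul x y (False,True,True) = x (False,False,False) * y (False,True,True) - x (True,False,False) * y (True,True,True) + x (False,True,False) * y (False,False,True) + x (False,False,True) * y (False,True,False) - x (True,True,False) * y (True,False,True) - x (True,False,True) * y (True,True,False) + x (False,True,True) * y (False,False,False) - x (True,True,True) * y (True,False,False)"
  "tc_mul x y (True,True,True) = x (False,False,False) * y (True,True,True) + x (True,False,False) * y (False,True,True) + x (False,True,False) * y (True,False,True) + x (False,False,True) * y (True,True,False) + x (True,True,False) * y (False,False,True) + x (True,False,True) * y (False,True,False) + x (False,True,True) * y (True,False,False) + x (True,True,True) * y (False,False,False)"
  by (simp_all add: mulsimps)


lemma span4_char:
  assumes "distinct [p,q,r,s]"
  shows "(x \<in> span4 (basis p) (basis q) (basis r) (basis s)) = (\<forall>k. k\<noteq>p \<and> k\<noteq>q \<and> k\<noteq>r \<and> k\<noteq>s \<longrightarrow> x k = 0)"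
proof
  assume "x \<in> span4 (basis p) (basis q) (basis r) (basis s)"
  then show "\<forall>k. k\<noteq>p \<and> k\<noteq>q \<and> k\<noteq>r \<and> k\<noteq>s \<longrightarrow> x k = 0"
    by (auto simp: span4_def tc_add_def tc_scale_def basis_def)
next
  assume h: "\<forall>k. k\<noteq>p \<and> k\<noteq>q \<and> k\<noteq>r \<and> k\<noteq>s \<longrightarrow> x k = 0"
  have "x = tc_add (tc_scale (x p) (basis p)) (tc_add (tc_scale (x q) (basis q)) (tc_add (tc_scale (x r) (basis r)) (tc_scale (x s) (basis s))))"
    using assms h by (auto simp: tc_add_def tc_scale_def basis_def)
  then show "x \<in> span4 (basis p) (basis q) (basis r) (basis s)" unfolding span4_def by blast
qed

lemma span3_char:
  assumes "distinct [p,q,r]"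
  shows "(x \<in> span3 (basis p) (basis q) (basis r)) = (\<forall>k. k\<noteq>p \<and> k\<noteq>q \<and> k\<noteq>r \<longrightarrow> x k = 0)"
proof
  assume "x \<in> span3 (basis p) (basis q) (basis r)"
  then show "\<forall>k. k\<noteq>p \<and> k\<noteq>q \<and> k\<noteq>r \<longrightarrow> x k = 0"
    by (auto simp: span3_def tc_add_def tc_scale_def basis_def)
next
  assume h: "\<forall>k. k\<noteq>p \<and> k\<noteq>q \<and> k\<noteq>r \<longrightarrow> x k = 0"
  have "x = tc_add (tc_scale (x p) (basis p)) (tc_add (tc_scale (x q) (basis q)) (tc_scale (x r) (basis r)))"
    using assms h by (auto simp: tc_add_def tc_scale_def basis_def)
  then show "x \<in> span3 (basis p) (basis q) (basis r)" unfolding span3_def by blast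
qed

lemma D1: "x \<in> span4 e_1 e_i1 e_i2 e_j1 \<longleftrightarrow> x (False,False,True) = 0 \<and> x (True,False,True) = 0 \<and> x (False,True,True) = 0 \<and> x (True,True,True) = 0"
  unfolding e_1_def e_i1_def e_i2_def e_i3_def e_j1_def e_j2_def e_j3_def e_i4_def
    ix_1_def ix_i1_def ix_i2_def ix_i3_def ix_j1_def ix_j2_def ix_j3_def ix_i4_def
  by (subst span4_char, simp, subst all_tc, simp)
lemma E1: "x \<in> span4 e_i1 e_i2 e_j2 e_j3 \<longleftrightarrow> x (False,False,False) = 0 \<and> x (False,False,True) = 0 \<and> x (True,True,False) = 0 \<and> x (True,True,True) = 0"
  unfolding e_1_def e_i1_def e_i2_def e_i3_def e_j1_def e_j2_def e_j3_def e_i4_def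
    ix_1_def ix_i1_def ix_i2_def ix_i3_def ix_j1_def ix_j2_def ix_j3_def ix_i4_def
  by (subst span4_char, simp, subst all_tc, simp)
lemma E2: "x \<in> span4 e_i1 e_j1 e_j2 e_i4 \<longleftrightarrow> x (False,False,False) = 0 \<and> x (False,True,False) = 0 \<and> x (False,False,True) = 0 \<and> x (False,True,True) = 0"
  unfolding e_1_def e_i1_def e_i2_def e_i3_def e_j1_def e_j2_def e_j3_def e_i4_def
    ix_1_def ix_i1_def ix_i2_def ix_i3_def ix_j1_def ix_j2_def ix_j3_def ix_i4_def
  by (subst span4_char, simp, subst all_tc, simp)
lemma D3: "x \<in> span4 e_1 e_j1 e_j2 e_j3 \<longleftrightarrow> x (True,False,False) = 0 \<and> x (False,True,False) = 0 \<and> x (False,False,True) = 0 \<and> x (True,True,True) = 0"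
  unfolding e_1_def e_i1_def e_i2_def e_i3_def e_j1_def e_j2_def e_j3_def e_i4_def
    ix_1_def ix_i1_def ix_i2_def ix_i3_def ix_j1_def ix_j2_def ix_j3_def ix_i4_def
  by (subst span4_char, simp, subst all_tc, simp)
lemma S1: "x \<in> span3 e_1 e_i1 e_i2 \<longleftrightarrow> x (False,False,True) = 0 \<and> x (True,True,False) = 0 \<and> x (True,False,True) = 0 \<and> x (False,True,True) = 0 \<and> x (True,True,True) = 0"
  unfolding e_1_def e_i1_def e_i2_def e_i3_def e_j1_def e_j2_def e_j3_def e_i4_def
    ix_1_def ix_i1_def ix_i2_def ix_i3_def ix_j1_def ix_j2_def ix_j3_def ix_i4_def
  by (subst span3_char, simp, subst all_tc, simp)
lemma S1t: "x \<in> span3 e_i1 e_i2 e_j2 \<longleftrightarrow> x (False,False,False) = 0 \<and> x (False,False,True) = 0 \<and> x (True,True,False) = 0 \<and> x (False,True,True) = 0 \<and> x (True,True,True) = 0"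
  unfolding e_1_def e_i1_def e_i2_def e_i3_def e_j1_def e_j2_def e_j3_def e_i4_def
    ix_1_def ix_i1_def ix_i2_def ix_i3_def ix_j1_def ix_j2_def ix_j3_def ix_i4_def
  by (subst span3_char, simp, subst all_tc, simp)
lemma S2: "x \<in> span3 e_1 e_i1 e_j1 \<longleftrightarrow> x (False,True,False) = 0 \<and> x (False,False,True) = 0 \<and> x (True,False,True) = 0 \<and> x (False,True,True) = 0 \<and> x (True,True,True) = 0"
  unfolding e_1_def e_i1_def e_i2_def e_i3_def e_j1_def e_j2_def e_j3_def e_i4_def
    ix_1_def ix_i1_def ix_i2_def ix_i3_def ix_j1_def ix_j2_def ix_j3_def ix_i4_def
  by (subst span3_char, simp, subst all_tc, simp)
lemma S2t: "x \<in> span3 e_i1 e_j1 e_j2 \<longleftrightarrow> x (False,False,False) = 0 \<and> x (False,True,False) = 0 \<and> x (False,False,True) = 0 \<and> x (False,True,True) = 0 \<and> x (True,True,True) = 0"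
  unfolding e_1_def e_i1_def e_i2_def e_i3_def e_j1_def e_j2_def e_j3_def e_i4_def
    ix_1_def ix_i1_def ix_i2_def ix_i3_def ix_j1_def ix_j2_def ix_j3_def ix_i4_def
  by (subst span3_char, simp, subst all_tc, simp)
lemma S3: "x \<in> span3 e_1 e_j1 e_j2 \<longleftrightarrow> x (True,False,False) = 0 \<and> x (False,True,False) = 0 \<and> x (False,False,True) = 0 \<and> x (False,True,True) = 0 \<and> x (True,True,True) = 0"
  unfolding e_1_def e_i1_def e_i2_def e_i3_def e_j1_def e_j2_def e_j3_def e_i4_def
    ix_1_def ix_i1_def ix_i2_def ix_i3_def ix_j1_def ix_j2_def ix_j3_def ix_i4_def
  by (subst span3_char, simp, subst all_tc, simp)
lemma S3t: "x \<in> span3 e_j1 e_j2 e_j3 \<longleftrightarrow> x (False,False,False) = 0 \<and> x (True,False,False) = 0 \<and> x (False,True,False) = 0 \<and> x (False,False,True) = 0 \<and> x (True,True,True) = 0"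
  unfolding e_1_def e_i1_def e_i2_def e_i3_def e_j1_def e_j2_def e_j3_def e_i4_def
    ix_1_def ix_i1_def ix_i2_def ix_i3_def ix_j1_def ix_j2_def ix_j3_def ix_i4_def
  by (subst span3_char, simp, subst all_tc, simp)

lemma generic:
  fixes phi psi :: "tc \<Rightarrow> tc" and D E S S' :: "tc set"
  assumes left: "\<And>x. x\<in>D \<Longrightarrow> psi (phi x) = x"
    and right: "\<And>y. y\<in>E \<Longrightarrow> phi (psi y) = y"
    and phiD: "\<And>x. x\<in>D \<Longrightarrow> phi x \<in> E"
    and psiE: "\<And>y. y\<in>E \<Longrightarrow> psi y \<in> D"
    and conj: "\<And>x c. x\<in>D \<Longrightarrow> c\<in>D \<Longrightarrow> phi (Q3 c x) = Q3 (phi c) (phi x)"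
    and clos: "\<And>x c. x\<in>D \<Longrightarrow> c\<in>D \<Longrightarrow> Q3 c x \<in> D"
    and zD: "tc_zero \<in> D" and z: "phi tc_zero = tc_zero"
    and nrm: "\<And>x. x\<in>D \<Longrightarrow> tc_norm (phi x) = tc_norm x"
    and SD: "S \<subseteq> D" and S'E: "S' \<subseteq> E" and phiS: "phi ` S \<subseteq> S'" and psiS: "psi ` S' \<subseteq> S"
  shows "bij_betw phi D E"
    and "\<And>c \<eta>. c\<in>D \<Longrightarrow> \<eta>\<in>E \<Longrightarrow> phi (Q3 c (the_inv_into D phi \<eta>)) = Q3 (phi c) \<eta>"
    and "{c\<in>S'. bounded_orbit c} = phi ` {c\<in>S. bounded_orbit c}"
proof -
  show bij: "bij_betw phi D E"
    by (rule bij_betw_byWitness[where f'=psi]) (use left right phiD psiE in auto)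
  have inj: "inj_on phi D" using bij bij_betw_def by blast
  have inv: "the_inv_into D phi \<eta> = psi \<eta>" if "\<eta>\<in>E" for \<eta>
    using the_inv_into_f_eq[OF inj right[OF that] psiE[OF that]] .
  show "phi (Q3 c (the_inv_into D phi \<eta>)) = Q3 (phi c) \<eta>" if "c\<in>D" "\<eta>\<in>E" for c \<eta>
    using inv[OF that(2)] conj[OF psiE[OF that(2)] that(1)] right[OF that(2)] by simp
  have it: "(Q3 c ^^ m) tc_zero \<in> D \<and> (Q3 (phi c) ^^ m) tc_zero = phi ((Q3 c ^^ m) tc_zero)"
    if "c\<in>D" for c m
  proof (induction m)
    case 0 then show ?case using zD z by simp
  next
    case (Suc m) then show ?case using clos conj that by simp
  qed
  have bo: "bounded_orbit (phi c) \<longleftrightarrow> bounded_orbit c" if "c\<in>D" for c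
    unfolding bounded_orbit_def using it[OF that] nrm by simp
  show "{c\<in>S'. bounded_orbit c} = phi ` {c\<in>S. bounded_orbit c}"
  proof
    show "{c\<in>S'. bounded_orbit c} \<subseteq> phi ` {c\<in>S. bounded_orbit c}"
    proof
      fix y assume y: "y \<in> {c\<in>S'. bounded_orbit c}"
      then have yE: "y\<in>E" using S'E by auto
      have "psi y \<in> S" using y psiS by auto
      moreover have "bounded_orbit (psi y)" using bo[OF psiE[OF yE]] right[OF yE] y by simp
      ultimately show "y \<in> phi ` {c\<in>S. bounded_orbit c}" using right[OF yE] by (metis (mono_tags, lifting) image_eqI mem_Collect_eq)
    qed
    show "phi ` {c\<in>S. bounded_orbit c} \<subseteq> {c\<in>S'. bounded_orbit c}"
      using phiS bo SD by auto
  qed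
qed


lemmas cs = tc_add_def tc_scale_def e_1_def e_i1_def e_i2_def e_i3_def e_j1_def e_j2_def e_j3_def e_i4_def
    ix_1_def ix_i1_def ix_i2_def ix_i3_def ix_j1_def ix_j2_def ix_j3_def ix_i4_def basis_def
    Q3_def mul_coords tc_zero_def tc_norm_def sum_tc

definition psi1 :: "tc \<Rightarrow> tc" where
  "psi1 y = tc_add (tc_scale (y ix_j2) e_1) (tc_add (tc_scale (y ix_i1) e_i1) (tc_add (tc_scale (y ix_i2) e_i2) (tc_scale (- y ix_j3) e_j1)))"
lemma phi1_left: "x\<in>span4 e_1 e_i1 e_i2 e_j1 \<Longrightarrow> psi1 (phi1 x) = x"
  unfolding D1
  by (rule tc_eqI; simp add: phi1_def psi1_def cs; simp add: algebra_simps power2_eq_square power3_eq_cube)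
lemma phi1_right: "y\<in>span4 e_i1 e_i2 e_j2 e_j3 \<Longrightarrow> phi1 (psi1 y) = y"
  unfolding E1
  by (rule tc_eqI; simp add: phi1_def psi1_def cs; simp add: algebra_simps power2_eq_square power3_eq_cube)
lemma phi1_phiD: "x\<in>span4 e_1 e_i1 e_i2 e_j1 \<Longrightarrow> phi1 x \<in> span4 e_i1 e_i2 e_j2 e_j3"
  unfolding D1 E1
  by (simp add: phi1_def psi1_def cs; simp add: algebra_simps power2_eq_square power3_eq_cube)
lemma phi1_psiE: "y\<in>span4 e_i1 e_i2 e_j2 e_j3 \<Longrightarrow> psi1 y \<in> span4 e_1 e_i1 e_i2 e_j1"
  unfolding D1 E1
  by (simp add: phi1_def psi1_def cs; simp add: algebra_simps power2_eq_square power3_eq_cube)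
lemma phi1_conj: "x\<in>span4 e_1 e_i1 e_i2 e_j1 \<Longrightarrow> c\<in>span4 e_1 e_i1 e_i2 e_j1 \<Longrightarrow> phi1 (Q3 c x) = Q3 (phi1 c) (phi1 x)"
  unfolding D1
  by (rule tc_eqI; simp add: phi1_def psi1_def cs; simp add: algebra_simps power2_eq_square power3_eq_cube)
lemma phi1_clos: "x\<in>span4 e_1 e_i1 e_i2 e_j1 \<Longrightarrow> c\<in>span4 e_1 e_i1 e_i2 e_j1 \<Longrightarrow> Q3 c x \<in> span4 e_1 e_i1 e_i2 e_j1"
  unfolding D1
  by (simp add: phi1_def psi1_def cs; simp add: algebra_simps power2_eq_square power3_eq_cube)
lemma phi1_zD: "tc_zero \<in> span4 e_1 e_i1 e_i2 e_j1"
  unfolding D1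
  by (simp add: phi1_def psi1_def cs; simp add: algebra_simps power2_eq_square power3_eq_cube)
lemma phi1_z: "phi1 tc_zero = tc_zero"
  unfolding tc_zero_def
  by (rule tc_eqI; simp add: phi1_def psi1_def cs; simp add: algebra_simps power2_eq_square power3_eq_cube)
lemma phi1_nrm: "x\<in>span4 e_1 e_i1 e_i2 e_j1 \<Longrightarrow> tc_norm (phi1 x) = tc_norm x"
  unfolding D1
  by (simp add: phi1_def psi1_def cs; simp add: algebra_simps power2_eq_square power3_eq_cube)
lemma phi1_SD: "span3 e_1 e_i1 e_i2 \<subseteq> span4 e_1 e_i1 e_i2 e_j1"
  unfolding subset_iff S1 D1
  by (simp add: phi1_def psi1_def cs; simp add: algebra_simps power2_eq_square power3_eq_cube)
lemma phi1_SE: "span3 e_i1 e_i2 e_j2 \<subseteq> span4 e_i1 e_i2 e_j2 e_j3"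
  unfolding subset_iff S1t E1
  by (simp add: phi1_def psi1_def cs; simp add: algebra_simps power2_eq_square power3_eq_cube)
lemma phi1_phiS: "x\<in>span3 e_1 e_i1 e_i2 \<Longrightarrow> phi1 x \<in> span3 e_i1 e_i2 e_j2"
  unfolding S1 S1t
  by (simp add: phi1_def psi1_def cs; simp add: algebra_simps power2_eq_square power3_eq_cube)
lemma phi1_psiS: "x\<in>span3 e_i1 e_i2 e_j2 \<Longrightarrow> psi1 x \<in> span3 e_1 e_i1 e_i2"
  unfolding S1 S1t
  by (simp add: phi1_def psi1_def cs; simp add: algebra_simps power2_eq_square power3_eq_cube)

lemma phi1_g1: "bij_betw phi1 (span4 e_1 e_i1 e_i2 e_j1) (span4 e_i1 e_i2 e_j2 e_j3)"
  by (rule generic(1)[where phi=phi1 and psi=psi1 and D="span4 e_1 e_i1 e_i2 e_j1" and E="span4 e_i1 e_i2 e_j2 e_j3" and S="span3 e_1 e_i1 e_i2" and S'="span3 e_i1 e_i2 e_j2"]) (auto simp: phi1_left phi1_right phi1_phiD phi1_psiE phi1_conj phi1_clos phi1_zD phi1_z phi1_nrm phi1_SD phi1_SE phi1_phiS phi1_psiS intro!: image_subsetI)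
lemma phi1_g2: "c \<in> span4 e_1 e_i1 e_i2 e_j1 \<Longrightarrow> \<eta> \<in> span4 e_i1 e_i2 e_j2 e_j3 \<Longrightarrow> phi1 (Q3 c (the_inv_into (span4 e_1 e_i1 e_i2 e_j1) phi1 \<eta>)) = Q3 (phi1 c) \<eta>"
  by (rule generic(2)[where phi=phi1 and psi=psi1 and D="span4 e_1 e_i1 e_i2 e_j1" and E="span4 e_i1 e_i2 e_j2 e_j3" and S="span3 e_1 e_i1 e_i2" and S'="span3 e_i1 e_i2 e_j2"]) (auto simp: phi1_left phi1_right phi1_phiD phi1_psiE phi1_conj phi1_clos phi1_zD phi1_z phi1_nrm phi1_SD phi1_SE phi1_phiS phi1_psiS intro!: image_subsetI)
lemma phi1_g3: "{c\<in>span3 e_i1 e_i2 e_j2. bounded_orbit c} = phi1 ` {c\<in>span3 e_1 e_i1 e_i2. bounded_orbit c}"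
  by (rule generic(3)[where phi=phi1 and psi=psi1 and D="span4 e_1 e_i1 e_i2 e_j1" and E="span4 e_i1 e_i2 e_j2 e_j3" and S="span3 e_1 e_i1 e_i2" and S'="span3 e_i1 e_i2 e_j2"]) (auto simp: phi1_left phi1_right phi1_phiD phi1_psiE phi1_conj phi1_clos phi1_zD phi1_z phi1_nrm phi1_SD phi1_SE phi1_phiS phi1_psiS intro!: image_subsetI)

definition psi2 :: "tc \<Rightarrow> tc" where
  "psi2 y = tc_add (tc_scale (y ix_j2) e_1) (tc_add (tc_scale (y ix_i1) e_i1) (tc_add (tc_scale (y ix_i4) e_i2) (tc_scale (y ix_j1) e_j1)))"
lemma phi2_left: "x\<in>span4 e_1 e_i1 e_i2 e_j1 \<Longrightarrow> psi2 (phi2 x) = x"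
  unfolding D1
  by (rule tc_eqI; simp add: phi2_def psi2_def cs; simp add: algebra_simps power2_eq_square power3_eq_cube)
lemma phi2_right: "y\<in>span4 e_i1 e_j1 e_j2 e_i4 \<Longrightarrow> phi2 (psi2 y) = y"
  unfolding E2
  by (rule tc_eqI; simp add: phi2_def psi2_def cs; simp add: algebra_simps power2_eq_square power3_eq_cube)
lemma phi2_phiD: "x\<in>span4 e_1 e_i1 e_i2 e_j1 \<Longrightarrow> phi2 x \<in> span4 e_i1 e_j1 e_j2 e_i4"
  unfolding D1 E2
  by (simp add: phi2_def psi2_def cs; simp add: algebra_simps power2_eq_square power3_eq_cube)
lemma phi2_psiE: "y\<in>span4 e_i1 e_j1 e_j2 e_i4 \<Longrightarrow> psi2 y \<in> span4 e_1 e_i1 e_i2 e_j1"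
  unfolding D1 E2
  by (simp add: phi2_def psi2_def cs; simp add: algebra_simps power2_eq_square power3_eq_cube)
lemma phi2_conj: "x\<in>span4 e_1 e_i1 e_i2 e_j1 \<Longrightarrow> c\<in>span4 e_1 e_i1 e_i2 e_j1 \<Longrightarrow> phi2 (Q3 c x) = Q3 (phi2 c) (phi2 x)"
  unfolding D1
  by (rule tc_eqI; simp add: phi2_def psi2_def cs; simp add: algebra_simps power2_eq_square power3_eq_cube)
lemma phi2_clos: "x\<in>span4 e_1 e_i1 e_i2 e_j1 \<Longrightarrow> c\<in>span4 e_1 e_i1 e_i2 e_j1 \<Longrightarrow> Q3 c x \<in> span4 e_1 e_i1 e_i2 e_j1"
  unfolding D1
  by (simp add: phi2_def psi2_def cs; simp add: algebra_simps power2_eq_square power3_eq_cube)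
lemma phi2_zD: "tc_zero \<in> span4 e_1 e_i1 e_i2 e_j1"
  unfolding D1
  by (simp add: phi2_def psi2_def cs; simp add: algebra_simps power2_eq_square power3_eq_cube)
lemma phi2_z: "phi2 tc_zero = tc_zero"
  unfolding tc_zero_def
  by (rule tc_eqI; simp add: phi2_def psi2_def cs; simp add: algebra_simps power2_eq_square power3_eq_cube)
lemma phi2_nrm: "x\<in>span4 e_1 e_i1 e_i2 e_j1 \<Longrightarrow> tc_norm (phi2 x) = tc_norm x"
  unfolding D1
  by (simp add: phi2_def psi2_def cs; simp add: algebra_simps power2_eq_square power3_eq_cube)
lemma phi2_SD: "span3 e_1 e_i1 e_j1 \<subseteq> span4 e_1 e_i1 e_i2 e_j1"
  unfolding subset_iff S2 D1
  by (simp add: phi2_def psi2_def cs; simp add: algebra_simps power2_eq_square power3_eq_cube)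
lemma phi2_SE: "span3 e_i1 e_j1 e_j2 \<subseteq> span4 e_i1 e_j1 e_j2 e_i4"
  unfolding subset_iff S2t E2
  by (simp add: phi2_def psi2_def cs; simp add: algebra_simps power2_eq_square power3_eq_cube)
lemma phi2_phiS: "x\<in>span3 e_1 e_i1 e_j1 \<Longrightarrow> phi2 x \<in> span3 e_i1 e_j1 e_j2"
  unfolding S2 S2t
  by (simp add: phi2_def psi2_def cs; simp add: algebra_simps power2_eq_square power3_eq_cube)
lemma phi2_psiS: "x\<in>span3 e_i1 e_j1 e_j2 \<Longrightarrow> psi2 x \<in> span3 e_1 e_i1 e_j1"
  unfolding S2 S2t
  by (simp add: phi2_def psi2_def cs; simp add: algebra_simps power2_eq_square power3_eq_cube)

lemma phi2_g1: "bij_betw phi2 (span4 e_1 e_i1 e_i2 e_j1) (span4 e_i1 e_j1 e_j2 e_i4)"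
  by (rule generic(1)[where phi=phi2 and psi=psi2 and D="span4 e_1 e_i1 e_i2 e_j1" and E="span4 e_i1 e_j1 e_j2 e_i4" and S="span3 e_1 e_i1 e_j1" and S'="span3 e_i1 e_j1 e_j2"]) (auto simp: phi2_left phi2_right phi2_phiD phi2_psiE phi2_conj phi2_clos phi2_zD phi2_z phi2_nrm phi2_SD phi2_SE phi2_phiS phi2_psiS intro!: image_subsetI)
lemma phi2_g2: "c \<in> span4 e_1 e_i1 e_i2 e_j1 \<Longrightarrow> \<eta> \<in> span4 e_i1 e_j1 e_j2 e_i4 \<Longrightarrow> phi2 (Q3 c (the_inv_into (span4 e_1 e_i1 e_i2 e_j1) phi2 \<eta>)) = Q3 (phi2 c) \<eta>"
  by (rule generic(2)[where phi=phi2 and psi=psi2 and D="span4 e_1 e_i1 e_i2 e_j1" and E="span4 e_i1 e_j1 e_j2 e_i4" and S="span3 e_1 e_i1 e_j1" and S'="span3 e_i1 e_j1 e_j2"]) (auto simp: phi2_left phi2_right phi2_phiD phi2_psiE phi2_conj phi2_clos phi2_zD phi2_z phi2_nrm phi2_SD phi2_SE phi2_phiS phi2_psiS intro!: image_subsetI)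
lemma phi2_g3: "{c\<in>span3 e_i1 e_j1 e_j2. bounded_orbit c} = phi2 ` {c\<in>span3 e_1 e_i1 e_j1. bounded_orbit c}"
  by (rule generic(3)[where phi=phi2 and psi=psi2 and D="span4 e_1 e_i1 e_i2 e_j1" and E="span4 e_i1 e_j1 e_j2 e_i4" and S="span3 e_1 e_i1 e_j1" and S'="span3 e_i1 e_j1 e_j2"]) (auto simp: phi2_left phi2_right phi2_phiD phi2_psiE phi2_conj phi2_clos phi2_zD phi2_z phi2_nrm phi2_SD phi2_SE phi2_phiS phi2_psiS intro!: image_subsetI)

definition psi3 :: "tc \<Rightarrow> tc" where
  "psi3 y = tc_add (tc_scale (y ix_j1) e_1) (tc_add (tc_scale (y ix_j2) e_j1) (tc_add (tc_scale (y ix_j3) e_j2) (tc_scale (y ix_1) e_j3)))"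
lemma phi3_left: "x\<in>span4 e_1 e_j1 e_j2 e_j3 \<Longrightarrow> psi3 (phi3 x) = x"
  unfolding D3
  by (rule tc_eqI; simp add: phi3_def psi3_def cs; simp add: algebra_simps power2_eq_square power3_eq_cube)
lemma phi3_right: "y\<in>span4 e_1 e_j1 e_j2 e_j3 \<Longrightarrow> phi3 (psi3 y) = y"
  unfolding D3
  by (rule tc_eqI; simp add: phi3_def psi3_def cs; simp add: algebra_simps power2_eq_square power3_eq_cube)
lemma phi3_phiD: "x\<in>span4 e_1 e_j1 e_j2 e_j3 \<Longrightarrow> phi3 x \<in> span4 e_1 e_j1 e_j2 e_j3"
  unfolding D3 D3
  by (simp add: phi3_def psi3_def cs; simp add: algebra_simps power2_eq_square power3_eq_cube)
lemma phi3_psiE: "y\<in>span4 e_1 e_j1 e_j2 e_j3 \<Longrightarrow> psi3 y \<in> span4 e_1 e_j1 e_j2 e_j3"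
  unfolding D3 D3
  by (simp add: phi3_def psi3_def cs; simp add: algebra_simps power2_eq_square power3_eq_cube)
lemma phi3_conj: "x\<in>span4 e_1 e_j1 e_j2 e_j3 \<Longrightarrow> c\<in>span4 e_1 e_j1 e_j2 e_j3 \<Longrightarrow> phi3 (Q3 c x) = Q3 (phi3 c) (phi3 x)"
  unfolding D3
  by (rule tc_eqI; simp add: phi3_def psi3_def cs; simp add: algebra_simps power2_eq_square power3_eq_cube)
lemma phi3_clos: "x\<in>span4 e_1 e_j1 e_j2 e_j3 \<Longrightarrow> c\<in>span4 e_1 e_j1 e_j2 e_j3 \<Longrightarrow> Q3 c x \<in> span4 e_1 e_j1 e_j2 e_j3"
  unfolding D3
  by (simp add: phi3_def psi3_def cs; simp add: algebra_simps power2_eq_square power3_eq_cube)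
lemma phi3_zD: "tc_zero \<in> span4 e_1 e_j1 e_j2 e_j3"
  unfolding D3
  by (simp add: phi3_def psi3_def cs; simp add: algebra_simps power2_eq_square power3_eq_cube)
lemma phi3_z: "phi3 tc_zero = tc_zero"
  unfolding tc_zero_def
  by (rule tc_eqI; simp add: phi3_def psi3_def cs; simp add: algebra_simps power2_eq_square power3_eq_cube)
lemma phi3_nrm: "x\<in>span4 e_1 e_j1 e_j2 e_j3 \<Longrightarrow> tc_norm (phi3 x) = tc_norm x"
  unfolding D3
  by (simp add: phi3_def psi3_def cs; simp add: algebra_simps power2_eq_square power3_eq_cube)
lemma phi3_SD: "span3 e_1 e_j1 e_j2 \<subseteq> span4 e_1 e_j1 e_j2 e_j3"
  unfolding subset_iff S3 D3
  by (simp add: phi3_def psi3_def cs; simp add: algebra_simps power2_eq_square power3_eq_cube)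
lemma phi3_SE: "span3 e_j1 e_j2 e_j3 \<subseteq> span4 e_1 e_j1 e_j2 e_j3"
  unfolding subset_iff S3t D3
  by (simp add: phi3_def psi3_def cs; simp add: algebra_simps power2_eq_square power3_eq_cube)
lemma phi3_phiS: "x\<in>span3 e_1 e_j1 e_j2 \<Longrightarrow> phi3 x \<in> span3 e_j1 e_j2 e_j3"
  unfolding S3 S3t
  by (simp add: phi3_def psi3_def cs; simp add: algebra_simps power2_eq_square power3_eq_cube)
lemma phi3_psiS: "x\<in>span3 e_j1 e_j2 e_j3 \<Longrightarrow> psi3 x \<in> span3 e_1 e_j1 e_j2"
  unfolding S3 S3t
  by (simp add: phi3_def psi3_def cs; simp add: algebra_simps power2_eq_square power3_eq_cube)

lemma phi3_g1: "bij_betw phi3 (span4 e_1 e_j1 e_j2 e_j3) (span4 e_1 e_j1 e_j2 e_j3)"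
  by (rule generic(1)[where phi=phi3 and psi=psi3 and D="span4 e_1 e_j1 e_j2 e_j3" and E="span4 e_1 e_j1 e_j2 e_j3" and S="span3 e_1 e_j1 e_j2" and S'="span3 e_j1 e_j2 e_j3"]) (auto simp: phi3_left phi3_right phi3_phiD phi3_psiE phi3_conj phi3_clos phi3_zD phi3_z phi3_nrm phi3_SD phi3_SE phi3_phiS phi3_psiS intro!: image_subsetI)
lemma phi3_g2: "c \<in> span4 e_1 e_j1 e_j2 e_j3 \<Longrightarrow> \<eta> \<in> span4 e_1 e_j1 e_j2 e_j3 \<Longrightarrow> phi3 (Q3 c (the_inv_into (span4 e_1 e_j1 e_j2 e_j3) phi3 \<eta>)) = Q3 (phi3 c) \<eta>"
  by (rule generic(2)[where phi=phi3 and psi=psi3 and D="span4 e_1 e_j1 e_j2 e_j3" and E="span4 e_1 e_j1 e_j2 e_j3" and S="span3 e_1 e_j1 e_j2" and S'="span3 e_j1 e_j2 e_j3"]) (auto simp: phi3_left phi3_right phi3_phiD phi3_psiE phi3_conj phi3_clos phi3_zD phi3_z phi3_nrm phi3_SD phi3_SE phi3_phiS phi3_psiS intro!: image_subsetI)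
lemma phi3_g3: "{c\<in>span3 e_j1 e_j2 e_j3. bounded_orbit c} = phi3 ` {c\<in>span3 e_1 e_j1 e_j2. bounded_orbit c}"
  by (rule generic(3)[where phi=phi3 and psi=psi3 and D="span4 e_1 e_j1 e_j2 e_j3" and E="span4 e_1 e_j1 e_j2 e_j3" and S="span3 e_1 e_j1 e_j2" and S'="span3 e_j1 e_j2 e_j3"]) (auto simp: phi3_left phi3_right phi3_phiD phi3_psiE phi3_conj phi3_clos phi3_zD phi3_z phi3_nrm phi3_SD phi3_SE phi3_phiS phi3_psiS intro!: image_subsetI)
lemma part1: "\<forall>c1 c2 c3 :: real.
        let c = tc_add (tc_scale c1 e_1) (tc_add (tc_scale c2 e_i1) (tc_scale c3 e_i2));
            c' = phi1 c
        in c' = tc_add (tc_scale c2 e_i1) (tc_add (tc_scale c3 e_i2) (tc_scale c1 e_j2))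
           \<and> (\<forall>\<eta>\<in>span4 e_i1 e_i2 e_j2 e_j3.
                phi1 (Q3 c (the_inv_into (span4 e_1 e_i1 e_i2 e_j1) phi1 \<eta>)) = Q3 c' \<eta>)"
proof (intro allI)
  fix c1 c2 c3 :: real
  define c where "c = tc_add (tc_scale c1 e_1) (tc_add (tc_scale c2 e_i1) (tc_scale c3 e_i2))"
  have cD: "c \<in> span4 e_1 e_i1 e_i2 e_j1" unfolding c_def D1 by (simp add: cs)
  have eq: "phi1 c = tc_add (tc_scale c2 e_i1) (tc_add (tc_scale c3 e_i2) (tc_scale c1 e_j2))"
    unfolding c_def by (rule tc_eqI; simp add: phi1_def cs)
  show "let c = tc_add (tc_scale c1 e_1) (tc_add (tc_scale c2 e_i1) (tc_scale c3 e_i2));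
            c' = phi1 c
        in c' = tc_add (tc_scale c2 e_i1) (tc_add (tc_scale c3 e_i2) (tc_scale c1 e_j2))
           \<and> (\<forall>\<eta>\<in>span4 e_i1 e_i2 e_j2 e_j3.
                phi1 (Q3 c (the_inv_into (span4 e_1 e_i1 e_i2 e_j1) phi1 \<eta>)) = Q3 c' \<eta>)"
    unfolding Let_def c_def[symmetric] using eq phi1_g2[OF cD] by simp
qed

lemma part2: "\<forall>c1 c2 c3 :: real.
        let c = tc_add (tc_scale c1 e_1) (tc_add (tc_scale c2 e_i1) (tc_scale c3 e_j1));
            c' = phi2 c
        in c' = tc_add (tc_scale c2 e_i1) (tc_add (tc_scale c3 e_j1) (tc_scale c1 e_j2))
           \<and> (\<forall>\<eta>\<in>span4 e_i1 e_j1 e_j2 e_i4.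
                phi2 (Q3 c (the_inv_into (span4 e_1 e_i1 e_i2 e_j1) phi2 \<eta>)) = Q3 c' \<eta>)"
proof (intro allI)
  fix c1 c2 c3 :: real
  define c where "c = tc_add (tc_scale c1 e_1) (tc_add (tc_scale c2 e_i1) (tc_scale c3 e_j1))"
  have cD: "c \<in> span4 e_1 e_i1 e_i2 e_j1" unfolding c_def D1 by (simp add: cs)
  have eq: "phi2 c = tc_add (tc_scale c2 e_i1) (tc_add (tc_scale c3 e_j1) (tc_scale c1 e_j2))"
    unfolding c_def by (rule tc_eqI; simp add: phi2_def cs)
  show "let c = tc_add (tc_scale c1 e_1) (tc_add (tc_scale c2 e_i1) (tc_scale c3 e_j1));
            c' = phi2 c
        in c' = tc_add (tc_scale c2 e_i1) (tc_add (tc_scale c3 e_j1) (tc_scale c1 e_j2))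
           \<and> (\<forall>\<eta>\<in>span4 e_i1 e_j1 e_j2 e_i4.
                phi2 (Q3 c (the_inv_into (span4 e_1 e_i1 e_i2 e_j1) phi2 \<eta>)) = Q3 c' \<eta>)"
    unfolding Let_def c_def[symmetric] using eq phi2_g2[OF cD] by simp
qed

lemma part3: "\<forall>c1 c2 c3 :: real.
        let c = tc_add (tc_scale c1 e_1) (tc_add (tc_scale c2 e_j1) (tc_scale c3 e_j2));
            c' = phi3 c
        in c' = tc_add (tc_scale c1 e_j1) (tc_add (tc_scale c2 e_j2) (tc_scale c3 e_j3))
           \<and> (\<forall>\<eta>\<in>span4 e_1 e_j1 e_j2 e_j3.
                phi3 (Q3 c (the_inv_into (span4 e_1 e_j1 e_j2 e_j3) phi3 \<eta>)) = Q3 c' \<eta>)"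
proof (intro allI)
  fix c1 c2 c3 :: real
  define c where "c = tc_add (tc_scale c1 e_1) (tc_add (tc_scale c2 e_j1) (tc_scale c3 e_j2))"
  have cD: "c \<in> span4 e_1 e_j1 e_j2 e_j3" unfolding c_def D3 by (simp add: cs)
  have eq: "phi3 c = tc_add (tc_scale c1 e_j1) (tc_add (tc_scale c2 e_j2) (tc_scale c3 e_j3))"
    unfolding c_def by (rule tc_eqI; simp add: phi3_def cs)
  show "let c = tc_add (tc_scale c1 e_1) (tc_add (tc_scale c2 e_j1) (tc_scale c3 e_j2));
            c' = phi3 c
        in c' = tc_add (tc_scale c1 e_j1) (tc_add (tc_scale c2 e_j2) (tc_scale c3 e_j3))
           \<and> (\<forall>\<eta>\<in>span4 e_1 e_j1 e_j2 e_j3.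
                phi3 (Q3 c (the_inv_into (span4 e_1 e_j1 e_j2 e_j3) phi3 \<eta>)) = Q3 c' \<eta>)"
    unfolding Let_def c_def[symmetric] using eq phi3_g2[OF cD] by simp
qed
theorem mainTheorem16:
  shows
  "bij_betw phi1 (span4 e_1 e_i1 e_i2 e_j1) (span4 e_i1 e_i2 e_j2 e_j3)
   \<and> (\<forall>c1 c2 c3 :: real.
        let c = tc_add (tc_scale c1 e_1) (tc_add (tc_scale c2 e_i1) (tc_scale c3 e_i2));
            c' = phi1 c
        in c' = tc_add (tc_scale c2 e_i1) (tc_add (tc_scale c3 e_i2) (tc_scale c1 e_j2))
           \<and> (\<forall>\<eta>\<in>span4 e_i1 e_i2 e_j2 e_j3.
                phi1 (Q3 c (the_inv_into (span4 e_1 e_i1 e_i2 e_j1) phi1 \<eta>)) = Q3 c' \<eta>))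
   \<and> bij_betw phi2 (span4 e_1 e_i1 e_i2 e_j1) (span4 e_i1 e_j1 e_j2 e_i4)
   \<and> (\<forall>c1 c2 c3 :: real.
        let c = tc_add (tc_scale c1 e_1) (tc_add (tc_scale c2 e_i1) (tc_scale c3 e_j1));
            c' = phi2 c
        in c' = tc_add (tc_scale c2 e_i1) (tc_add (tc_scale c3 e_j1) (tc_scale c1 e_j2))
           \<and> (\<forall>\<eta>\<in>span4 e_i1 e_j1 e_j2 e_i4.
                phi2 (Q3 c (the_inv_into (span4 e_1 e_i1 e_i2 e_j1) phi2 \<eta>)) = Q3 c' \<eta>))
   \<and> bij_betw phi3 (span4 e_1 e_j1 e_j2 e_j3) (span4 e_1 e_j1 e_j2 e_j3)
   \<and> (\<forall>c1 c2 c3 :: real.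
        let c = tc_add (tc_scale c1 e_1) (tc_add (tc_scale c2 e_j1) (tc_scale c3 e_j2));
            c' = phi3 c
        in c' = tc_add (tc_scale c1 e_j1) (tc_add (tc_scale c2 e_j2) (tc_scale c3 e_j3))
           \<and> (\<forall>\<eta>\<in>span4 e_1 e_j1 e_j2 e_j3.
                phi3 (Q3 c (the_inv_into (span4 e_1 e_j1 e_j2 e_j3) phi3 \<eta>)) = Q3 c' \<eta>))
   \<and> T3 e_i1 e_i2 e_j2 = phi1 ` T3 e_1 e_i1 e_i2
   \<and> T3 e_i1 e_j1 e_j2 = phi2 ` T3 e_1 e_i1 e_j1
   \<and> T3 e_j1 e_j2 e_j3 = phi3 ` T3 e_1 e_j1 e_j2"
  unfolding T3_def
  using phi1_g1 phi1_g3 phi2_g1 phi2_g3 phi3_g1 phi3_g3 part1 part2 part3 by blast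

end
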